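(* Let $G$ be a finite simple graph, $1\le k\le\operatorname{mat}(G)$, and let $M$ be a $k$-admissable matching of $G$ that is a perfect matching of $G$. Let $M=M_1\cup\dots\cup M_r$ be a $k$-admissable partition of $M$ for $G$. If $x$ is a vertex of some edge of $M_i$ and $y$ is a vertex of some edge of $M_j$ with $i\neq j$, then $x$ and $y$ lie in different connected components of $G$.
   Context: $\operatorname{mat}(G)$ is the matching number; a perfect matching covers every vertex. Two edges form a gap if they are disjoint and no edge of $G$ joins a vertex of one to a vertex of the other. A sequence $(a_1,\dots,a_n)$ of integers is $k$-admissable if $a_i\ge1$ and $\sum a_i\le n+k-1$. A $k$-admissable partition of a matching $M$ for $G$ is a decomposition $M=M_1\cup\dots\cup M_r$ into nonempty pairwise disjoint subsets such that edges from different $M_i$'s always form a gap in $G$, $(|M_1|,\dots,|M_r|)$ is $k$-admissable, and the induced subgraph of $G$ on $\bigcup_{e\in M_i}e$ is a forest for each $i$. $M$ is $k$-admissable if it has such a partition. *)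

theory Defs
  imports Main
begin

definition simple_graph :: "'a set \<Rightarrow> 'a set set \<Rightarrow> bool" where
  "simple_graph V E \<longleftrightarrow> finite V \<and> (\<forall>e\<in>E. e \<subseteq> V \<and> card e = 2)"

definition matching :: "'a set set \<Rightarrow> 'a set set \<Rightarrow> bool" where
  "matching E M \<longleftrightarrow> M \<subseteq> E \<and> (\<forall>e\<in>M. \<forall>f\<in>M. e \<noteq> f \<longrightarrow> e \<inter> f = {})"

definition perfect_matching :: "'a set \<Rightarrow> 'a set set \<Rightarrow> 'a set set \<Rightarrow> bool" where
  "perfect_matching V E M \<longleftrightarrow> matching E M \<and> \<Union>M = V"

definition mat :: "'a set set \<Rightarrow> nat" where
  "mat E = Max {card M | M. matching E M}"

definition gap :: "'a set set \<Rightarrow> 'a set \<Rightarrow> 'a set \<Rightarrow> bool" where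
  "gap E e f \<longleftrightarrow> e \<inter> f = {} \<and> (\<forall>x\<in>e. \<forall>y\<in>f. {x, y} \<notin> E)"

definition k_admissable_seq :: "nat \<Rightarrow> int list \<Rightarrow> bool" where
  "k_admissable_seq k as \<longleftrightarrow> (\<forall>a\<in>set as. a \<ge> 1) \<and>
      sum_list as \<le> int (length as) + int k - 1"

definition induced_edges :: "'a set set \<Rightarrow> 'a set \<Rightarrow> 'a set set" where
  "induced_edges E S = {e \<in> E. e \<subseteq> S}"

definition is_cycle :: "'a set set \<Rightarrow> 'a list \<Rightarrow> bool" where
  "is_cycle F vs \<longleftrightarrow> length vs \<ge> 3 \<and> distinct vs \<and>
      (\<forall>i < length vs. {vs ! i, vs ! ((i + 1) mod length vs)} \<in> F)"

definition forest :: "'a set set \<Rightarrow> bool" where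
  "forest F \<longleftrightarrow> \<not> (\<exists>vs. is_cycle F vs)"

definition k_admissable_partition ::
    "nat \<Rightarrow> 'a set set \<Rightarrow> 'a set set \<Rightarrow> 'a set set list \<Rightarrow> bool" where
  "k_admissable_partition k E M Ms \<longleftrightarrow>
     (\<forall>i < length Ms. Ms ! i \<noteq> {}) \<and>
     (\<forall>i < length Ms. \<forall>j < length Ms. i \<noteq> j \<longrightarrow> Ms ! i \<inter> Ms ! j = {}) \<and>
     \<Union>(set Ms) = M \<and>
     (\<forall>i < length Ms. \<forall>j < length Ms. i \<noteq> j \<longrightarrow>
        (\<forall>e \<in> Ms ! i. \<forall>f \<in> Ms ! j. gap E e f)) \<and>
     k_admissable_seq k (map (\<lambda>A. int (card A)) Ms) \<and>
     (\<forall>i < length Ms. forest (induced_edges E (\<Union>(Ms ! i))))"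

definition k_admissable_matching :: "nat \<Rightarrow> 'a set set \<Rightarrow> 'a set set \<Rightarrow> bool" where
  "k_admissable_matching k E M \<longleftrightarrow> matching E M \<and> (\<exists>Ms. k_admissable_partition k E M Ms)"

definition same_component :: "'a set set \<Rightarrow> 'a \<Rightarrow> 'a \<Rightarrow> bool" where
  "same_component E x y \<longleftrightarrow> (\<lambda>u v. {u, v} \<in> E)\<^sup>*\<^sup>* x y"

end

theory Submission
  imports Defs
begin

theorem lemma5p8:
  fixes V :: "'a set" and E :: "'a set set" and M :: "'a set set"
    and Ms :: "'a set set list" and k i j :: nat and x y :: 'a
  assumes "simple_graph V E"
    and "1 \<le> k" and "k \<le> mat E"
    and "k_admissable_matching k E M"
    and "perfect_matching V E M"
    and "k_admissable_partition k E M Ms"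
    and "i < length Ms" and "j < length Ms" and "i \<noteq> j"
    and "e \<in> Ms ! i" and "x \<in> e"
    and "f \<in> Ms ! j" and "y \<in> f"
  shows "\<not> same_component E x y"
proof
  assume "same_component E x y"
  hence R: "(\<lambda>u v. {u, v} \<in> E)\<^sup>*\<^sup>* x y" by (simp add: same_component_def)
  have U: "\<Union>(\<Union>(set Ms)) = V" using assms(5,6)
    by (simp add: perfect_matching_def k_admissable_partition_def)
  have G: "\<And>a b e f. a < length Ms \<Longrightarrow> b < length Ms \<Longrightarrow> a \<noteq> b \<Longrightarrow> e \<in> Ms ! a \<Longrightarrow> f \<in> Ms ! b \<Longrightarrow> gap E e f"
    using assms(6) by (simp add: k_admissable_partition_def)
  have sub: "\<And>ed. ed \<in> E \<Longrightarrow> ed \<subseteq> V" using assms(1) by (simp add: simple_graph_def)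
  have "y \<in> \<Union>(Ms ! i)" using R
  proof (induction rule: rtranclp_induct)
    case base then show ?case using assms(10,11) by blast
  next
    case (step z w)
    then obtain e' where e': "e' \<in> Ms ! i" "z \<in> e'" by blast
    have "w \<in> V" using sub[OF step(2)] by blast
    then obtain g where g: "g \<in> \<Union>(set Ms)" "w \<in> g" using U by blast
    then obtain l where l: "l < length Ms" "g \<in> Ms ! l" by (auto simp: in_set_conv_nth)
    show ?case
    proof (cases "l = i")
      case True then show ?thesis using l g by blast
    next
      case False
      have "gap E e' g" using G[OF assms(7) l(1) _ e'(1) l(2)] False by simp
      then show ?thesis using e' g step(2) by (simp add: gap_def)
    qed
  qed
  then obtain e1 where "e1 \<in> Ms ! i" "y \<in> e1" by blast
  moreover have "gap E e1 f" using G[OF assms(7,8,9)] calculation assms(12) by blast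
  ultimately show False using assms(13) by (auto simp: gap_def)
qed

end
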